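(* Let $\mathcal G$ be an MMPG arena, let $(\sigma,\gamma)$ be an incentive strategy profile, and let $Q$ be the set of vertices occurring on $\pi_\sigma$. Then for every follower $p\in P\setminus\{l\}$ and every vertex $v\in Q\cap V_p$ we have $\gamma_p(\sigma)+r_p(\sigma)\ge \mathrm{val}_p(v)$.
   Context: A multi-player mean-payoff game (MMPG) arena is a tuple $\mathcal G=(P,V,(V_p)_{p\in P},v_0,E,(r_p)_{p\in P})$ where $P$ is a finite set of players containing a distinguished leader $l\in P$ (the other players are called followers), $V$ is a finite set of vertices with initial vertex $v_0\in V$, $(V_p)_{p\in P}$ is a partition of $V$ (player $p$ owns $V_p$), $E\subseteq V\times V$ is an edge set such that every vertex has at least one successor, and $r_p:E\to\mathbb Q$ is the reward function of player $p$. A history is a finite sequence $h=v_0v_1\dots v_n$ starting at $v_0$ with $(v_i,v_{i+1})\in E$ for all $i<n$; $\mathsf{last}(h)=v_n$. A play is an infinite such sequence. A strategy of player $p$ is a function $\sigma_p$ assigning to every history $h$ with $\mathsf{last}(h)\in V_p$ a vertex $v$ with $(\mathsf{last}(h),v)\in E$. A strategy profile $\sigma=(\sigma_p)_{p\in P}$ determines a unique play $\pi_\sigma$. The raw payoff of player $p$ on a play $\pi=v_0v_1\dots$ is $r_p(\pi)=\liminf_{n\to\infty}\frac1n\sum_{i=0}^{n-1}r_p((v_i,v_{i+1}))$, and $r_p(\sigma):=r_p(\pi_\sigma)$. For a profile $\sigma$, a player $p$ and a strategy $\sigma'$ of $p$, $\sigma_{p,\sigma'}$ denotes the profile obtained from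 $\sigma$ by replacing $p$'s strategy with $\sigma'$. An incentive for a follower $p$ is a function $\gamma_p$ from histories to $\mathbb R_{\ge 0}$; its value on a play $\pi=v_0v_1\dots$ is $\gamma_p(\pi)=\liminf_{n\to\infty}\frac1n\sum_{i=1}^{n}\gamma_p(v_0\dots v_i)$, and $\gamma_p(\sigma):=\gamma_p(\pi_\sigma)$. An incentive profile is $\gamma=(\gamma_p)_{p\in P\setminus\{l\}}$. A pair $(\sigma,\gamma)$ is an incentive strategy profile (ISP) if for every follower $p$ and every strategy $\sigma'$ of $p$: $r_p(\sigma)+\gamma_p(\sigma)\ge r_p(\sigma_{p,\sigma'})+\gamma_p(\sigma_{p,\sigma'})$. For a follower $p$, $\mathcal G_p$ is the two-player zero-sum mean-payoff game on the graph $(V,E)$ from any start vertex, in which player $p$ controls $V_p$ and maximises the liminf-average of $r_p$, while a coalition of all other players (including the leader) controls $V\setminus V_p$ and minimises it. Such games are determined with optimal memoryless strategies for both sides; $\mathrm{val}_p(v)$ denotes the value of $\mathcal G_p$ from vertex $v$. *)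

theory Defs
  imports Complex_Main "HOL-Library.Extended_Real" "HOL-Library.Liminf_Limsup"
begin

text \<open>Arena: players P with leader l, vertices V, owner function (encoding the
partition (V_p)), initial vertex v0, edges E, rewards r p : E -> Q.\<close>

definition mmpg :: "'p set \<Rightarrow> 'p \<Rightarrow> 'v set \<Rightarrow> ('v \<Rightarrow> 'p) \<Rightarrow> 'v \<Rightarrow> ('v \<times> 'v) set
    \<Rightarrow> ('p \<Rightarrow> 'v \<times> 'v \<Rightarrow> rat) \<Rightarrow> bool" where
  "mmpg P l V owner v0 E r \<longleftrightarrow>
     finite P \<and> l \<in> P \<and> finite V \<and> v0 \<in> V \<and> E \<subseteq> V \<times> V \<and>
     (\<forall>v\<in>V. \<exists>w. (v, w) \<in> E) \<and> (\<forall>v\<in>V. owner v \<in> P)"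

definition owned :: "'v set \<Rightarrow> ('v \<Rightarrow> 'p) \<Rightarrow> 'p \<Rightarrow> 'v set" where
  "owned V owner p = {v \<in> V. owner v = p}"

definition is_hist_from :: "('v \<times> 'v) set \<Rightarrow> 'v \<Rightarrow> 'v list \<Rightarrow> bool" where
  "is_hist_from E u h \<longleftrightarrow> h \<noteq> [] \<and> hd h = u \<and>
     (\<forall>i. Suc i < length h \<longrightarrow> (h ! i, h ! Suc i) \<in> E)"

definition is_strategy_from :: "('v \<times> 'v) set \<Rightarrow> 'v \<Rightarrow> 'v set \<Rightarrow> ('v list \<Rightarrow> 'v) \<Rightarrow> bool" where
  "is_strategy_from E u S f \<longleftrightarrow>
     (\<forall>h. is_hist_from E u h \<and> last h \<in> S \<longrightarrow> (last h, f h) \<in> E)"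

text \<open>The history v_0 ... v_n of length n+1 generated by a profile from start u.\<close>
fun hist_from :: "('v \<Rightarrow> 'p) \<Rightarrow> 'v \<Rightarrow> ('p \<Rightarrow> 'v list \<Rightarrow> 'v) \<Rightarrow> nat \<Rightarrow> 'v list" where
  "hist_from owner u \<sigma> 0 = [u]"
| "hist_from owner u \<sigma> (Suc n) =
     (let h = hist_from owner u \<sigma> n in h @ [\<sigma> (owner (last h)) h])"

definition play_from :: "('v \<Rightarrow> 'p) \<Rightarrow> 'v \<Rightarrow> ('p \<Rightarrow> 'v list \<Rightarrow> 'v) \<Rightarrow> nat \<Rightarrow> 'v" where
  "play_from owner u \<sigma> n = last (hist_from owner u \<sigma> n)"

definition mean_payoff :: "('v \<times> 'v \<Rightarrow> rat) \<Rightarrow> (nat \<Rightarrow> 'v) \<Rightarrow> ereal" where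
  "mean_payoff w x =
     liminf (\<lambda>n. ereal ((\<Sum>i<n. real_of_rat (w (x i, x (Suc i)))) / real n))"

text \<open>Value of an incentive along the play whose prefixes v_0...v_i are hs i.\<close>
definition incentive_value :: "('v list \<Rightarrow> real) \<Rightarrow> (nat \<Rightarrow> 'v list) \<Rightarrow> ereal" where
  "incentive_value g hs = liminf (\<lambda>n. ereal ((\<Sum>i\<in>{1..n}. g (hs i)) / real n))"

definition is_profile :: "'p set \<Rightarrow> 'v set \<Rightarrow> ('v \<Rightarrow> 'p) \<Rightarrow> 'v \<Rightarrow> ('v \<times> 'v) set
    \<Rightarrow> ('p \<Rightarrow> 'v list \<Rightarrow> 'v) \<Rightarrow> bool" where
  "is_profile P V owner v0 E \<sigma> \<longleftrightarrow>
     (\<forall>q\<in>P. is_strategy_from E v0 (owned V owner q) (\<sigma> q))"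

definition raw_payoff where
  "raw_payoff owner v0 r p \<sigma> = mean_payoff (r p) (play_from owner v0 \<sigma>)"

definition inc_payoff where
  "inc_payoff owner v0 \<gamma> p \<sigma> = incentive_value (\<gamma> p) (hist_from owner v0 \<sigma>)"

definition is_ISP :: "'p set \<Rightarrow> 'p \<Rightarrow> 'v set \<Rightarrow> ('v \<Rightarrow> 'p) \<Rightarrow> 'v \<Rightarrow> ('v \<times> 'v) set
    \<Rightarrow> ('p \<Rightarrow> 'v \<times> 'v \<Rightarrow> rat) \<Rightarrow> ('p \<Rightarrow> 'v list \<Rightarrow> 'v) \<Rightarrow> ('p \<Rightarrow> 'v list \<Rightarrow> real) \<Rightarrow> bool" where
  "is_ISP P l V owner v0 E r \<sigma> \<gamma> \<longleftrightarrow>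
     is_profile P V owner v0 E \<sigma> \<and>
     (\<forall>p\<in>P - {l}. \<forall>h. is_hist_from E v0 h \<longrightarrow> \<gamma> p h \<ge> 0) \<and>
     (\<forall>p\<in>P - {l}. \<forall>\<sigma>'. is_strategy_from E v0 (owned V owner p) \<sigma>' \<longrightarrow>
        raw_payoff owner v0 r p \<sigma> + inc_payoff owner v0 \<gamma> p \<sigma>
        \<ge> raw_payoff owner v0 r p (\<sigma>(p := \<sigma>')) + inc_payoff owner v0 \<gamma> p (\<sigma>(p := \<sigma>')))"

text \<open>Value of the zero-sum game G_p from v: what p can guarantee
  (sup over p's strategies of inf over coalition strategies); the game is determined.\<close>
definition val :: "'v set \<Rightarrow> ('v \<Rightarrow> 'p) \<Rightarrow> ('v \<times> 'v) set \<Rightarrow> ('p \<Rightarrow> 'v \<times> 'v \<Rightarrow> rat)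
    \<Rightarrow> 'p \<Rightarrow> 'v \<Rightarrow> ereal" where
  "val V owner E r p v =
     (SUP \<tau>\<in>{\<tau>. is_strategy_from E v (owned V owner p) \<tau>}.
        INF \<rho>\<in>{\<rho>. is_strategy_from E v (V - owned V owner p) \<rho>}.
          mean_payoff (r p) (play_from owner v (\<lambda>q. if q = p then \<tau> else \<rho>)))"

end

theory Submission imports Defs begin

lemma lt_liminf_ev:
  fixes X :: "_ \<Rightarrow> _ :: complete_linorder"
  shows "y < Liminf F X \<Longrightarrow> eventually (\<lambda>x. y < X x) F"
  using le_Liminf_iff[of "Liminf F X" F X] by auto

lemma shift_avg:
  fixes a b :: "nat \<Rightarrow> real"
  assumes ab: "\<And>n. a (n+k) = b n" and bd: "\<And>n. \<bar>b n\<bar> \<le> M"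
  shows "liminf (\<lambda>n. ereal ((\<Sum>i<n. b i)/real n)) \<le> liminf (\<lambda>n. ereal ((\<Sum>i<n. a i)/real n))"
proof -
  define S where "S = (\<Sum>i<k. a i)"
  define T where "T n = (\<Sum>i<n. b i)" for n
  have sumA: "(\<Sum>i<n+k. a i) = S + T n" for n
    by (induction n) (auto simp: S_def T_def ab add.commute)
  have Tb: "\<bar>T n\<bar> \<le> M * n" for n
  proof (induction n)
    case (Suc n) thus ?case using bd[of n] by (simp add: T_def algebra_simps)
  qed (simp add: T_def)
  have M0: "M \<ge> 0" using bd[of 0] by linarith
  define D where "D n = (S + T n)/real (n+k) - T n / real n" for n
  have Dbound: "\<bar>D n\<bar> \<le> (\<bar>S\<bar> + k*M) / real n" if "n \<ge> 1" for n
  proof -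
    have np: "real n > 0" using that by simp
    have nk: "real (n+k) > 0" using that by simp
    have "D n = S/real (n+k) - k * T n / (real n * real (n+k))"
      unfolding D_def using np nk by (simp add: divide_simps) (simp add: algebra_simps)
    also have "\<bar>\<dots>\<bar> \<le> \<bar>S\<bar>/real (n+k) + k * \<bar>T n\<bar> / (real n * real (n+k))"
      using abs_triangle_ineq4[of "S/real (n+k)" "k * T n / (real n * real (n+k))"] by (simp add: abs_mult abs_divide)
    also have "\<dots> \<le> \<bar>S\<bar>/real n + k * (M * n) / (real n * real (n+k))"
      apply (intro add_mono divide_left_mono divide_right_mono mult_left_mono)
      using np nk Tb[of n] by auto
    also have "k * (M * n) / (real n * real (n+k)) = k*M / real (n+k)" using np nk by (simp add: divide_simps)
    also have "\<dots> \<le> k*M / real n" apply (rule divide_left_mono) using np M0 by auto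
    finally show ?thesis by (simp add: add_divide_distrib)
  qed
  have D0: "D \<longlonglongrightarrow> 0"
  proof (rule tendsto_0_le[where K=1])
    show "\<forall>\<^sub>F n in sequentially. norm (D n) \<le> norm ((\<bar>S\<bar> + k*M) / real n) * 1"
      using Dbound M0 unfolding eventually_sequentially by (intro exI[of _ 1]) (auto simp: abs_divide)
    show "(\<lambda>n. (\<bar>S\<bar> + k*M) / real n) \<longlonglongrightarrow> 0" by (rule lim_const_over_n)
  qed
  have Aeq: "(\<Sum>i<n+k. a i) / real (n+k) = T n / real n + D n" for n
    unfolding D_def sumA by simp
  show ?thesis
    unfolding le_Liminf_iff T_def[symmetric]
  proof (intro allI impI)
    fix y assume y: "y < liminf (\<lambda>n. ereal (T n / real n))"
    hence ev: "\<forall>\<^sub>F n in sequentially. y < ereal (T n / real n)"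
      by (rule lt_liminf_ev)
    show "\<forall>\<^sub>F n in sequentially. y < ereal ((\<Sum>i<n. a i) / real n)"
    proof (cases y)
      case MInf then show ?thesis by simp
    next
      case PInf then show ?thesis using y by simp
    next
      case (real r)
      obtain z where z: "y < z" "z < liminf (\<lambda>n. ereal (T n / real n))" using dense[OF y] by blast
      then obtain zr where zr: "z = ereal zr" using real by (cases z) auto
      have ev1: "\<forall>\<^sub>F n in sequentially. zr < T n / real n"
        using lt_liminf_ev[OF z(2)] zr by auto
      have "zr - r > 0" using z(1) real zr by simp
      hence ev2: "\<forall>\<^sub>F n in sequentially. \<bar>D n\<bar> < zr - r"
        using tendstoD[OF D0] by (simp add: dist_real_def)
      have "\<forall>\<^sub>F n in sequentially. r < (\<Sum>i<n+k. a i) / real (n+k)"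
        using eventually_conj[OF ev1 ev2] by (rule eventually_mono) (unfold Aeq, linarith)
      hence "\<forall>\<^sub>F n in sequentially. r < (\<Sum>i<n. a i) / real n"
        using eventually_sequentially_seg[where P="\<lambda>n. r < (\<Sum>i<n. a i) / real n" and k=k] by simp
      thus ?thesis using real by simp
    qed
  qed
qed

lemma hist_len[simp]: "length (hist_from owner u \<sigma> n) = Suc n"
  by (induction n) (auto simp: Let_def)

lemma hist_ne[simp]: "hist_from owner u \<sigma> n \<noteq> []"
  using hist_len[of owner u \<sigma> n] by (metis length_0_conv nat.distinct(1))

lemma hist_hd[simp]: "hd (hist_from owner u \<sigma> n) = u"
  by (induction n) (auto simp: Let_def)

lemma is_hist_succ: "is_hist_from E u h \<longleftrightarrow> h \<noteq> [] \<and> hd h = u \<and> successively (\<lambda>x y. (x,y)\<in>E) h"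
  unfolding is_hist_from_def successively_conv_nth by auto

lemma hist_valid:
  assumes "u \<in> V" "E \<subseteq> V \<times> V"
    and val: "\<And>h. is_hist_from E u h \<Longrightarrow> last h \<in> V \<Longrightarrow> (last h, \<sigma> (owner (last h)) h) \<in> E"
  shows "is_hist_from E u (hist_from owner u \<sigma> n) \<and> last (hist_from owner u \<sigma> n) \<in> V"
proof (induction n)
  case 0 then show ?case using assms by (simp add: is_hist_succ)
next
  case (Suc n)
  define h where "h = hist_from owner u \<sigma> n"
  have e: "(last h, \<sigma> (owner (last h)) h) \<in> E" using Suc val h_def by auto
  have "is_hist_from E u (h @ [\<sigma> (owner (last h)) h])"
    using Suc e unfolding h_def[symmetric] is_hist_succ
    by (auto simp: successively_append_iff)
  moreover have "\<sigma> (owner (last h)) h \<in> V" using e assms(2) by auto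
  ultimately show ?case by (simp add: h_def[symmetric] Let_def)
qed

lemma play_edge:
  assumes "u \<in> V" "E \<subseteq> V \<times> V"
    and val: "\<And>h. is_hist_from E u h \<Longrightarrow> last h \<in> V \<Longrightarrow> (last h, \<sigma> (owner (last h)) h) \<in> E"
  shows "(play_from owner u \<sigma> n, play_from owner u \<sigma> (Suc n)) \<in> E"
  using hist_valid[where \<sigma>=\<sigma> and owner=owner and n=n, OF assms] val[of "hist_from owner u \<sigma> n"]
  by (simp add: play_from_def Let_def)

lemma hist_agree:
  assumes "\<And>h. length h \<le> k \<Longrightarrow> \<sigma>1 (owner (last h)) h = \<sigma>2 (owner (last h)) h"
  shows "n \<le> k \<Longrightarrow> hist_from owner u \<sigma>1 n = hist_from owner u \<sigma>2 n"
proof (induction n)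
  case (Suc n)
  then show ?case using assms[of "hist_from owner u \<sigma>2 n"] by (simp add: Let_def)
qed simp

theorem lemma2:
  assumes "mmpg P l V owner v0 E r"
    and "is_ISP P l V owner v0 E r \<sigma> \<gamma>"
  shows "\<forall>p\<in>P - {l}. \<forall>v\<in>range (play_from owner v0 \<sigma>) \<inter> owned V owner p.
           inc_payoff owner v0 \<gamma> p \<sigma> + raw_payoff owner v0 r p \<sigma> \<ge> val V owner E r p v"
proof (intro ballI)
  fix p v assume p: "p \<in> P - {l}" and v: "v \<in> range (play_from owner v0 \<sigma>) \<inter> owned V owner p"
  from v obtain k where vk: "v = play_from owner v0 \<sigma> k" by auto
  have vp: "v \<in> V" "owner v = p" using v by (auto simp: owned_def)
  have mm: "finite V" "v0 \<in> V" "E \<subseteq> V \<times> V" "\<And>v. v \<in> V \<Longrightarrow> owner v \<in> P" "p \<in> P"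
    using assms(1) p unfolding mmpg_def by auto
  have prof: "\<And>q. q \<in> P \<Longrightarrow> is_strategy_from E v0 (owned V owner q) (\<sigma> q)"
    using assms(2) unfolding is_ISP_def is_profile_def by auto
  have gam: "\<And>h. is_hist_from E v0 h \<Longrightarrow> \<gamma> p h \<ge> 0"
    using assms(2) p unfolding is_ISP_def by auto
  have isp: "\<And>\<sigma>'. is_strategy_from E v0 (owned V owner p) \<sigma>' \<Longrightarrow>
        raw_payoff owner v0 r p \<sigma> + inc_payoff owner v0 \<gamma> p \<sigma>
        \<ge> raw_payoff owner v0 r p (\<sigma>(p := \<sigma>')) + inc_payoff owner v0 \<gamma> p (\<sigma>(p := \<sigma>'))"
    using assms(2) p unfolding is_ISP_def by auto
  have sval: "(last h, \<sigma> (owner (last h)) h) \<in> E" if "is_hist_from E v0 h" "last h \<in> V" for h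
    using prof[of "owner (last h)"] that mm(4)[of "last h"] unfolding is_strategy_from_def owned_def by auto
  define H where "H = hist_from owner v0 \<sigma> k"
  define pre where "pre = butlast H"
  have Hh: "is_hist_from E v0 H" using hist_valid[where \<sigma>=\<sigma> and owner=owner, OF mm(2,3) sval] H_def by blast
  have Hpre: "H = pre @ [v]" unfolding pre_def H_def
    by (metis append_butlast_last_id hist_ne play_from_def vk)
  have lpre: "length pre = k" using Hpre H_def by (metis hist_len length_append_singleton nat.inject)
  show "val V owner E r p v \<le> inc_payoff owner v0 \<gamma> p \<sigma> + raw_payoff owner v0 r p \<sigma>"
    unfolding val_def
  proof (rule SUP_least)
    fix \<tau> assume "\<tau> \<in> {\<tau>. is_strategy_from E v (owned V owner p) \<tau>}"
    hence \<tau>: "is_strategy_from E v (owned V owner p) \<tau>" by simp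
    define \<sigma>' where "\<sigma>' h = (if length h \<le> k then \<sigma> p h else if h ! k = v then \<tau> (drop k h) else \<sigma> p h)" for h
    define dev where "dev = \<sigma>(p := \<sigma>')"
    define \<rho> where "\<rho> h' = \<sigma> (owner (last h')) (pre @ h')" for h'
    define pf where "pf = (\<lambda>q. if q = p then \<tau> else \<rho>)"
    have \<sigma>'s: "is_strategy_from E v0 (owned V owner p) \<sigma>'"
      unfolding is_strategy_from_def
    proof (intro allI impI)
      fix h assume h: "is_hist_from E v0 h \<and> last h \<in> owned V owner p"
      show "(last h, \<sigma>' h) \<in> E"
      proof (cases "\<not> length h \<le> k \<and> h ! k = v")
        case True
        have hd: "is_hist_from E v (drop k h)"
          using h True unfolding is_hist_succ
          by (metis append_take_drop_id drop_eq_Nil hd_drop_conv_nth not_le successively_append_iff)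
        have "last (drop k h) = last h" using True by (simp add: last_drop)
        then show ?thesis using \<tau> hd h True unfolding is_strategy_from_def \<sigma>'_def by auto
      next
        case False
        then show ?thesis using prof[OF mm(5)] h unfolding is_strategy_from_def \<sigma>'_def by auto
      qed
    qed
    have dval: "(last h, dev (owner (last h)) h) \<in> E" if "is_hist_from E v0 h" "last h \<in> V" for h
    proof (cases "owner (last h) = p")
      case True
      then show ?thesis using \<sigma>'s that unfolding is_strategy_from_def dev_def owned_def by auto
    next
      case False
      then show ?thesis using sval[OF that] unfolding dev_def by auto
    qed
    have agree: "hist_from owner v0 dev n = hist_from owner v0 \<sigma> n" if "n \<le> k" for n
      by (rule hist_agree[OF _ that]) (auto simp: dev_def \<sigma>'_def)
    have corr: "hist_from owner v0 dev (k + n) = pre @ hist_from owner v pf n" for n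
    proof (induction n)
      case 0
      then show ?case using agree[of k] Hpre H_def by simp
    next
      case (Suc n)
      define h' where "h' = hist_from owner v pf n"
      have ne: "h' \<noteq> []" "hd h' = v" unfolding h'_def by auto
      have "dev (owner (last h')) (pre @ h') = pf (owner (last h')) h'"
      proof (cases "owner (last h') = p")
        case True
        have "(pre @ h') ! k = v" using lpre ne by (simp add: nth_append hd_conv_nth)
        then show ?thesis using True lpre ne unfolding dev_def pf_def \<sigma>'_def by simp
      next
        case False
        then show ?thesis unfolding dev_def pf_def \<rho>_def by simp
      qed
      then show ?case using Suc ne by (simp add: Let_def h'_def[symmetric])
    qed
    have playeq: "play_from owner v0 dev (n + k) = play_from owner v pf n" for n
      using corr[of n] by (simp add: play_from_def add.commute)
    have \<rho>s: "is_strategy_from E v (V - owned V owner p) \<rho>"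
      unfolding is_strategy_from_def
    proof (intro allI impI)
      fix h' assume h': "is_hist_from E v h' \<and> last h' \<in> V - owned V owner p"
      have "is_hist_from E v0 (pre @ h')"
      proof -
        have s1: "successively (\<lambda>x y. (x,y)\<in>E) (pre @ [v])" using Hh Hpre by (simp add: is_hist_succ)
        have "h' \<noteq> []" "hd h' = v" "successively (\<lambda>x y. (x,y)\<in>E) h'" using h' by (auto simp: is_hist_succ)
        moreover have "hd (pre @ h') = v0"
          using Hh Hpre \<open>h' \<noteq> []\<close> \<open>hd h' = v\<close> by (cases pre) (auto simp: is_hist_succ)
        ultimately show ?thesis using s1 by (auto simp: is_hist_succ successively_append_iff)
      qed
      moreover have "last (pre @ h') = last h'" using h' by (auto simp: is_hist_succ)
      ultimately show "(last h', \<rho> h') \<in> E" using sval[of "pre @ h'"] h' unfolding \<rho>_def by auto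
    qed
    define a where "a i = real_of_rat (r p (play_from owner v0 dev i, play_from owner v0 dev (Suc i)))" for i
    define b where "b i = real_of_rat (r p (play_from owner v pf i, play_from owner v pf (Suc i)))" for i
    define M where "M = Max ((\<lambda>e. \<bar>real_of_rat (r p e)\<bar>) ` E)"
    have finE: "finite E" using mm(1,3) finite_subset by blast
    have aM: "\<bar>a i\<bar> \<le> M" for i
      unfolding a_def M_def using play_edge[where \<sigma>=dev and owner=owner and n=i, OF mm(2,3) dval] finE by (intro Max_ge) auto
    have ab: "a (n + k) = b n" for n
      unfolding a_def b_def using playeq[of n] playeq[of "Suc n"] by simp
    have bM: "\<bar>b n\<bar> \<le> M" for n using aM[of "n+k"] ab[of n] by simp
    have "(INF \<rho>\<in>{\<rho>. is_strategy_from E v (V - owned V owner p) \<rho>}.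
          mean_payoff (r p) (play_from owner v (\<lambda>q. if q = p then \<tau> else \<rho>)))
         \<le> mean_payoff (r p) (play_from owner v pf)"
      unfolding pf_def using \<rho>s by (intro INF_lower) simp
    also have "\<dots> \<le> raw_payoff owner v0 r p dev"
      unfolding raw_payoff_def mean_payoff_def
      using shift_avg[of a k b M, OF ab bM] unfolding a_def b_def by simp
    also have "\<dots> \<le> raw_payoff owner v0 r p dev + inc_payoff owner v0 \<gamma> p dev"
    proof -
      have "0 \<le> inc_payoff owner v0 \<gamma> p dev"
        unfolding inc_payoff_def incentive_value_def
      proof (rule Liminf_bounded, rule always_eventually, intro allI)
        fix n
        have "\<And>i. 0 \<le> \<gamma> p (hist_from owner v0 dev i)"
          using gam hist_valid[where \<sigma>=dev and owner=owner, OF mm(2,3) dval] by blast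
        then show "0 \<le> ereal ((\<Sum>i\<in>{1..n}. \<gamma> p (hist_from owner v0 dev i)) / real n)"
          by (simp add: sum_nonneg)
      qed
      then show ?thesis by (rule add_increasing2) simp
    qed
    also have "\<dots> \<le> inc_payoff owner v0 \<gamma> p \<sigma> + raw_payoff owner v0 r p \<sigma>"
      using isp[OF \<sigma>'s] unfolding dev_def by (simp add: add.commute)
    finally show "(INF \<rho>\<in>{\<rho>. is_strategy_from E v (V - owned V owner p) \<rho>}.
          mean_payoff (r p) (play_from owner v (\<lambda>q. if q = p then \<tau> else \<rho>)))
         \<le> inc_payoff owner v0 \<gamma> p \<sigma> + raw_payoff owner v0 r p \<sigma>" .
  qed
qed

end
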